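(* Let $\alpha,\beta$ be compositions with $\beta\subseteq\alpha$ such that $\alpha/\beta$ is reduced and $\beta$ is a partition (i.e. $\beta_1\ge\beta_2\ge\cdots$). Then $\mathrm{SET}(\alpha/\beta)$ has a unique minimal element, $S^{\mathrm{col}}_{\alpha/\beta}$. Equivalently, $\mathrm{SET}(\alpha/\beta)$ coincides with the interval $[S^{\mathrm{col}}_{\alpha/\beta},S^{\mathrm{row}}_{\alpha/\beta}]$ of $\mathrm{SIT}(\alpha/\beta)$, and its rank is $\binom{|\alpha/\beta|}{2}-\sum_{c\in\alpha/\beta}\mathrm{ls}(c)$.
   Context: A composition $\alpha=(\alpha_1,\ldots,\alpha_k)$ is a finite sequence of positive integers, $|\alpha|=\sum\alpha_i$. Its diagram has rows numbered from the bottom (row 1 lowest), row $i$ consisting of the cells in columns $1,\ldots,\alpha_i$. For $\beta\subseteq\alpha$ (i.e. $\ell(\beta)\le\ell(\alpha)$, $\beta_j\le\alpha_j$), the skew diagram $\alpha/\beta$ consists of the cells in row $i$, column $j$ with $\beta_i<j\le\alpha_i$ ($\beta_i=0$ for $i>\ell(\beta)$); $n=|\alpha/\beta|$. $\alpha/\beta$ is reduced if it has no empty row (no $i$ with $\alpha_i=\beta_i$). $\mathrm{SIT}(\alpha/\beta)$: bijective fillings of $\alpha/\beta$ with $1,\ldots,n$ with rows increasing left to right and column-1 entries increasing bottom to top. $\mathrm{SET}(\alpha/\beta)\subseteq\mathrm{SIT}(\alpha/\beta)$: fillings with all rows increasing left to right and all columns increasing bottom to top. For $1\le i\le n-1$,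 $\pi_i(T)=T$ if $i+1$ is in a strictly higher row than $i$, $\pi_i(T)=s_i(T)$ (swap $i$ and $i+1$) if $i+1$ is in a strictly lower row than $i$, and $\pi_i(T)=0$ otherwise. The poset order on $\mathrm{SIT}(\alpha/\beta)$: $T\le T'$ iff $T'$ is obtained from $T$ by a sequence of operators $\pi_i$ (all intermediate results nonzero); this poset is graded with rank function given by the number of inversions of the reading word, and $\mathrm{SET}(\alpha/\beta)$ has the induced order. $S^{\mathrm{row}}_{\alpha/\beta}$ is filled with $1,\ldots,n$ consecutively along rows left to right, from the bottom row upward; $S^{\mathrm{col}}_{\alpha/\beta}$ is filled consecutively along columns bottom to top, from the leftmost column rightward. For a cell $c$, $\mathrm{ls}(c)$ is the number of cells of $\alpha/\beta$ other than $c$ weakly southwest of $c$. *)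

theory Defs
  imports Main
begin

text \<open>Compositions are lists of positive naturals; row i (1-based, counted from the
bottom) of a composition alpha has length alpha!(i-1). Cells are pairs (row, column),
both 1-based.\<close>

definition is_composition :: "nat list \<Rightarrow> bool" where
  "is_composition a \<longleftrightarrow> (\<forall>x\<in>set a. 0 < x)"

definition is_partition :: "nat list \<Rightarrow> bool" where
  "is_partition b \<longleftrightarrow> sorted_wrt (\<ge>) b"

definition part :: "nat list \<Rightarrow> nat \<Rightarrow> nat" where
  "part b i = (if 1 \<le> i \<and> i \<le> length b then b ! (i - 1) else 0)"

definition comp_contained :: "nat list \<Rightarrow> nat list \<Rightarrow> bool" where
  "comp_contained b a \<longleftrightarrow> length b \<le> length a \<and> (\<forall>j. part b j \<le> part a j)"

definition skew_cells :: "nat list \<Rightarrow> nat list \<Rightarrow> (nat \<times> nat) set" where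
  "skew_cells a b = {(i, j). 1 \<le> i \<and> i \<le> length a \<and> part b i < j \<and> j \<le> part a i}"

definition reduced :: "nat list \<Rightarrow> nat list \<Rightarrow> bool" where
  "reduced a b \<longleftrightarrow> (\<forall>i. 1 \<le> i \<and> i \<le> length a \<longrightarrow> part a i \<noteq> part b i)"

type_synonym filling = "nat \<times> nat \<Rightarrow> nat"

definition bij_filling :: "(nat \<times> nat) set \<Rightarrow> filling \<Rightarrow> bool" where
  "bij_filling D T \<longleftrightarrow> bij_betw T D {1..card D} \<and> (\<forall>c. c \<notin> D \<longrightarrow> T c = 0)"

definition SIT :: "nat list \<Rightarrow> nat list \<Rightarrow> filling set" where
  "SIT a b = {T. bij_filling (skew_cells a b) T
     \<and> (\<forall>i j j'. (i, j) \<in> skew_cells a b \<and> (i, j') \<in> skew_cells a b \<and> j < j' \<longrightarrow> T (i, j) < T (i, j'))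
     \<and> (\<forall>i i'. (i, 1) \<in> skew_cells a b \<and> (i', 1) \<in> skew_cells a b \<and> i < i' \<longrightarrow> T (i, 1) < T (i', 1))}"

definition SET :: "nat list \<Rightarrow> nat list \<Rightarrow> filling set" where
  "SET a b = {T \<in> SIT a b.
     \<forall>i i' j. (i, j) \<in> skew_cells a b \<and> (i', j) \<in> skew_cells a b \<and> i < i' \<longrightarrow> T (i, j) < T (i', j)}"

definition row_of :: "(nat \<times> nat) set \<Rightarrow> filling \<Rightarrow> nat \<Rightarrow> nat" where
  "row_of D T v = fst (THE c. c \<in> D \<and> T c = v)"

definition swap_entries :: "nat \<Rightarrow> filling \<Rightarrow> filling" where
  "swap_entries k T = (\<lambda>c. if T c = k then k + 1 else if T c = k + 1 then k else T c)"

text \<open>The operator pi_k; None represents the result 0.\<close>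
definition pi_op :: "(nat \<times> nat) set \<Rightarrow> nat \<Rightarrow> filling \<Rightarrow> filling option" where
  "pi_op D k T =
     (if row_of D T k < row_of D T (k + 1) then Some T
      else if row_of D T (k + 1) < row_of D T k then Some (swap_entries k T)
      else None)"

definition pi_step :: "(nat \<times> nat) set \<Rightarrow> filling \<Rightarrow> filling \<Rightarrow> bool" where
  "pi_step D T T' \<longleftrightarrow> (\<exists>k. 1 \<le> k \<and> k + 1 \<le> card D \<and> pi_op D k T = Some T')"

definition tab_le :: "nat list \<Rightarrow> nat list \<Rightarrow> filling \<Rightarrow> filling \<Rightarrow> bool" where
  "tab_le a b T T' \<longleftrightarrow> T \<in> SIT a b \<and> T' \<in> SIT a b \<and> (pi_step (skew_cells a b))\<^sup>*\<^sup>* T T'"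

definition S_row :: "nat list \<Rightarrow> nat list \<Rightarrow> filling" where
  "S_row a b = (\<lambda>c. if c \<in> skew_cells a b then
      card {d \<in> skew_cells a b. fst d < fst c} + card {d \<in> skew_cells a b. fst d = fst c \<and> snd d \<le> snd c}
    else 0)"

definition S_col :: "nat list \<Rightarrow> nat list \<Rightarrow> filling" where
  "S_col a b = (\<lambda>c. if c \<in> skew_cells a b then
      card {d \<in> skew_cells a b. snd d < snd c} + card {d \<in> skew_cells a b. snd d = snd c \<and> fst d \<le> fst c}
    else 0)"

definition ls :: "nat list \<Rightarrow> nat list \<Rightarrow> nat \<times> nat \<Rightarrow> nat" where
  "ls a b c = card {d \<in> skew_cells a b. d \<noteq> c \<and> fst d \<le> fst c \<and> snd d \<le> snd c}"

text \<open>Number of inversions of the reading word (rows read left to right, from the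
top row downward); this is the rank function of SIT(a/b).\<close>
definition inv_count :: "nat list \<Rightarrow> nat list \<Rightarrow> filling \<Rightarrow> nat" where
  "inv_count a b T = card {(c, d). c \<in> skew_cells a b \<and> d \<in> skew_cells a b
      \<and> (fst c > fst d \<or> (fst c = fst d \<and> snd c < snd d)) \<and> T c > T d}"

end

theory Submission
  imports Defs
begin


lemma finite_skew: "finite (skew_cells a b)"
proof -
  have "skew_cells a b \<subseteq> {..length a} \<times> {..sum_list a}"
  proof
    fix c assume "c \<in> skew_cells a b"
    then obtain i j where c: "c = (i,j)" "1 \<le> i" "i \<le> length a" "j \<le> part a i"
      by (auto simp: skew_cells_def)
    have "part a i \<le> sum_list a" using c elem_le_sum_list[of "i - 1" a]
      by (auto simp: part_def)
    then show "c \<in> {..length a} \<times> {..sum_list a}" using c by auto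
  qed
  then show ?thesis by (rule finite_subset) auto
qed

definition ordok :: "(nat \<times> nat \<Rightarrow> nat \<times> nat \<Rightarrow> bool) \<Rightarrow> (nat \<times> nat) set \<Rightarrow> filling \<Rightarrow> bool" where
  "ordok P D T \<longleftrightarrow> (\<forall>x\<in>D. \<forall>y\<in>D. P x y \<longrightarrow> T x < T y)"

definition Prow :: "nat \<times> nat \<Rightarrow> nat \<times> nat \<Rightarrow> bool" where
  "Prow x y \<longleftrightarrow> fst x = fst y \<and> snd x < snd y"
definition Pcol1 :: "nat \<times> nat \<Rightarrow> nat \<times> nat \<Rightarrow> bool" where
  "Pcol1 x y \<longleftrightarrow> snd x = 1 \<and> snd y = 1 \<and> fst x < fst y"
definition Pcol :: "nat \<times> nat \<Rightarrow> nat \<times> nat \<Rightarrow> bool" where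
  "Pcol x y \<longleftrightarrow> snd x = snd y \<and> fst x < fst y"

lemma SIT_iff: "T \<in> SIT a b \<longleftrightarrow> bij_filling (skew_cells a b) T \<and> ordok Prow (skew_cells a b) T
   \<and> ordok Pcol1 (skew_cells a b) T"
  unfolding SIT_def ordok_def Prow_def Pcol1_def by fastforce

lemma SET_iff: "T \<in> SET a b \<longleftrightarrow> T \<in> SIT a b \<and> ordok Pcol (skew_cells a b) T"
  unfolding SET_def ordok_def Pcol_def by fastforce

lemma bf_range: "bij_filling D T \<Longrightarrow> c \<in> D \<Longrightarrow> T c \<in> {1..card D}"
  unfolding bij_filling_def bij_betw_def by auto

lemma bf_inj: "bij_filling D T \<Longrightarrow> c \<in> D \<Longrightarrow> d \<in> D \<Longrightarrow> T c = T d \<Longrightarrow> c = d"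
  unfolding bij_filling_def bij_betw_def inj_on_def by auto

lemma bf_surj: "bij_filling D T \<Longrightarrow> k \<in> {1..card D} \<Longrightarrow> \<exists>c\<in>D. T c = k"
  unfolding bij_filling_def bij_betw_def by (metis imageE)

lemma bf_row_of: "bij_filling D T \<Longrightarrow> c \<in> D \<Longrightarrow> row_of D T (T c) = fst c"
proof -
  assume a: "bij_filling D T" "c \<in> D"
  have "(THE x. x \<in> D \<and> T x = T c) = c"
    by (rule the_equality) (use a bf_inj in auto)
  then show ?thesis by (simp add: row_of_def)
qed

definition tau :: "nat \<Rightarrow> nat \<Rightarrow> nat" where
  "tau k x = (if x = k then Suc k else if x = Suc k then k else x)"

lemma swap_tau: "swap_entries k T = tau k \<circ> T"
  by (auto simp: swap_entries_def tau_def fun_eq_iff)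

lemma sw_sw: "swap_entries k (swap_entries k T) = T"
  by (auto simp: swap_entries_def fun_eq_iff)

lemma tau_bij: "1 \<le> k \<Longrightarrow> Suc k \<le> n \<Longrightarrow> bij_betw (tau k) {1..n} {1..n}"
  by (rule bij_betw_byWitness[where f'="tau k"]) (auto simp: tau_def)

lemma sw_bf: assumes "bij_filling D T" "1 \<le> k" "Suc k \<le> card D"
  shows "bij_filling D (swap_entries k T)"
proof -
  have "bij_betw (tau k \<circ> T) D {1..card D}"
    using bij_betw_trans[OF _ tau_bij] assms unfolding bij_filling_def by blast
  then show ?thesis using assms unfolding bij_filling_def swap_tau by (auto simp: tau_def)
qed

lemma sw_vals:
  assumes bf: "bij_filling D T" and c0: "c0 \<in> D" "T c0 = k" and c1: "c1 \<in> D" "T c1 = Suc k"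
  shows "swap_entries k T c0 = Suc k" "swap_entries k T c1 = k"
   "\<And>x. x \<in> D \<Longrightarrow> x \<noteq> c0 \<Longrightarrow> x \<noteq> c1 \<Longrightarrow> swap_entries k T x = T x \<and> T x \<noteq> k \<and> T x \<noteq> Suc k"
proof -
  show "swap_entries k T c0 = Suc k" "swap_entries k T c1 = k" using assms by (auto simp: swap_entries_def)
  fix x assume x: "x \<in> D" "x \<noteq> c0" "x \<noteq> c1"
  have "T x \<noteq> k" using bf_inj[OF bf x(1) c0(1)] x c0 by auto
  moreover have "T x \<noteq> Suc k" using bf_inj[OF bf x(1) c1(1)] x c1 by auto
  ultimately show "swap_entries k T x = T x \<and> T x \<noteq> k \<and> T x \<noteq> Suc k" by (simp add: swap_entries_def)
qed

lemma sw_ord: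
  assumes bf: "bij_filling D T" and c0: "c0 \<in> D" "T c0 = k" and c1: "c1 \<in> D" "T c1 = Suc k"
    and ok: "ordok P D T" and np: "\<not> P c0 c1"
  shows "ordok P D (swap_entries k T)"
  unfolding ordok_def
proof (intro ballI impI)
  fix x y assume x: "x \<in> D" and y: "y \<in> D" and P: "P x y"
  have Txy: "T x < T y" using ok x y P by (auto simp: ordok_def)
  note V = sw_vals[OF bf c0 c1]
  have ne: "c0 \<noteq> c1" using c0 c1 by auto
  show "swap_entries k T x < swap_entries k T y"
    using Txy V(1,2) V(3)[OF x] V(3)[OF y] np P c0 c1 ne
    by (cases "x = c0"; cases "x = c1"; cases "y = c0"; cases "y = c1") auto
qed

definition mu :: "(nat \<times> nat) set \<Rightarrow> filling \<Rightarrow> nat" where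
  "mu D T = (\<Sum>c\<in>D. T c * fst c)"

lemma sum_two: "finite D \<Longrightarrow> c0 \<in> D \<Longrightarrow> c1 \<in> D \<Longrightarrow> c0 \<noteq> c1 \<Longrightarrow>
   (\<Sum>c\<in>D. f c) = f c0 + f c1 + (\<Sum>c\<in>D-{c0,c1}. f c)"
proof -
  assume a: "finite D" "c0 \<in> D" "c1 \<in> D" "c0 \<noteq> c1"
  have "(\<Sum>c\<in>D. f c) = f c0 + (\<Sum>c\<in>D-{c0}. f c)" using a by (simp add: sum.remove)
  also have "(\<Sum>c\<in>D-{c0}. f c) = f c1 + (\<Sum>c\<in>D-{c0}-{c1}. f c)" using a by (simp add: sum.remove)
  also have "D-{c0}-{c1} = D - {c0,c1}" by auto
  finally show ?thesis by (simp add: add.assoc)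
qed

lemma sw_mu:
  assumes fin: "finite D" and bf: "bij_filling D T" and c0: "c0 \<in> D" "T c0 = k" and c1: "c1 \<in> D" "T c1 = Suc k"
  shows "mu D (swap_entries k T) + fst c1 = mu D T + fst c0"
proof -
  note V = sw_vals[OF bf c0 c1]
  have ne: "c0 \<noteq> c1" using c0 c1 by auto
  have eq: "(\<Sum>c\<in>D-{c0,c1}. swap_entries k T c * fst c) = (\<Sum>c\<in>D-{c0,c1}. T c * fst c)"
    by (rule sum.cong) (use V(3) in auto)
  show ?thesis unfolding mu_def
    using sum_two[OF fin c0(1) c1(1) ne, of "\<lambda>c. swap_entries k T c * fst c"]
      sum_two[OF fin c0(1) c1(1) ne, of "\<lambda>c. T c * fst c"] eq V(1,2) c0 c1
    by (simp add: algebra_simps)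
qed



lemma pi_step_SIT:
  assumes T: "T \<in> SIT a b" and st: "pi_step (skew_cells a b) T T'"
  shows "T' \<in> SIT a b \<and> (T' = T \<or> mu (skew_cells a b) T < mu (skew_cells a b) T')
     \<and> (T \<in> SET a b \<longrightarrow> T' \<in> SET a b)"
proof -
  let ?D = "skew_cells a b"
  obtain k where k: "1 \<le> k" "k + 1 \<le> card ?D" "pi_op ?D k T = Some T'"
    using st by (auto simp: pi_step_def)
  have bf: "bij_filling ?D T" using T by (simp add: SIT_iff)
  obtain c0 where c0: "c0 \<in> ?D" "T c0 = k" using bf_surj[OF bf, of k] k by auto
  obtain c1 where c1: "c1 \<in> ?D" "T c1 = Suc k" using bf_surj[OF bf, of "Suc k"] k by auto
  have r0: "row_of ?D T k = fst c0" using bf_row_of[OF bf c0(1)] c0 by simp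
  have r1: "row_of ?D T (k+1) = fst c1" using bf_row_of[OF bf c1(1)] c1 by simp
  show ?thesis
  proof (cases "fst c0 < fst c1")
    case True
    then have "T' = T" using k(3) r0 r1 by (simp add: pi_op_def)
    then show ?thesis using T by simp
  next
    case False
    then have lt: "fst c1 < fst c0" and eq: "T' = swap_entries k T"
      using k(3) r0 r1 by (auto simp: pi_op_def split: if_splits)
    have np1: "\<not> Prow c0 c1" "\<not> Pcol1 c0 c1" "\<not> Pcol c0 c1"
      using lt by (auto simp: Prow_def Pcol1_def Pcol_def)
    have "T' \<in> SIT a b" using T unfolding SIT_iff eq
      using sw_bf[OF bf k(1)] k(2) sw_ord[OF bf c0 c1] np1 by auto
    moreover have "T \<in> SET a b \<longrightarrow> T' \<in> SET a b"
      using calculation sw_ord[OF bf c0 c1] np1 unfolding SET_iff eq by auto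
    moreover have "mu ?D T < mu ?D T'"
      using sw_mu[OF finite_skew bf c0 c1] lt eq by simp
    ultimately show ?thesis by simp
  qed
qed

lemma rt_SIT:
  assumes "(pi_step (skew_cells a b))\<^sup>*\<^sup>* T T'" and "T \<in> SIT a b"
  shows "T' \<in> SIT a b \<and> (T' = T \<or> mu (skew_cells a b) T < mu (skew_cells a b) T')
     \<and> (T \<in> SET a b \<longrightarrow> T' \<in> SET a b)"
  using assms(1)
proof (induction rule: rtranclp_induct)
  case base
  then show ?case using assms(2) by simp
next
  case (step y z)
  then show ?case using pi_step_SIT[of y a b z] by auto
qed

definition rk :: "(nat \<times> nat \<Rightarrow> nat \<times> nat \<Rightarrow> bool) \<Rightarrow> (nat \<times> nat) set \<Rightarrow> nat \<times> nat \<Rightarrow> nat" where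
  "rk R D c = card {d\<in>D. R d c \<or> d = c}"

definition strict_tot :: "(nat \<times> nat \<Rightarrow> nat \<times> nat \<Rightarrow> bool) \<Rightarrow> bool" where
  "strict_tot R \<longleftrightarrow> (\<forall>x. \<not> R x x) \<and> (\<forall>x y z. R x y \<longrightarrow> R y z \<longrightarrow> R x z) \<and> (\<forall>x y. x \<noteq> y \<longrightarrow> R x y \<or> R y x)"

definition rowlt :: "nat \<times> nat \<Rightarrow> nat \<times> nat \<Rightarrow> bool" where
  "rowlt c d \<longleftrightarrow> fst c < fst d \<or> (fst c = fst d \<and> snd c < snd d)"
definition collt :: "nat \<times> nat \<Rightarrow> nat \<times> nat \<Rightarrow> bool" where
  "collt c d \<longleftrightarrow> snd c < snd d \<or> (snd c = snd d \<and> fst c < fst d)"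

lemma st_rowlt: "strict_tot rowlt"
  unfolding strict_tot_def rowlt_def by (auto simp: prod_eq_iff)
lemma st_collt: "strict_tot collt"
  unfolding strict_tot_def collt_def by (auto simp: prod_eq_iff)

lemma rk_mono:
  assumes st: "strict_tot R" and fin: "finite D" and c: "c \<in> D" "c' \<in> D" "R c c'"
  shows "rk R D c < rk R D c'"
  unfolding rk_def
proof (rule psubset_card_mono)
  show "finite {d \<in> D. R d c' \<or> d = c'}" using fin by simp
  have "\<not> R c' c" "c' \<noteq> c" using st c unfolding strict_tot_def by blast+
  then show "{d \<in> D. R d c \<or> d = c} \<subset> {d \<in> D. R d c' \<or> d = c'}"
    using st c unfolding strict_tot_def by blast
qed

lemma rk_less_iff:
  assumes st: "strict_tot R" and fin: "finite D" and c: "c \<in> D" "d \<in> D"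
  shows "rk R D d < rk R D c \<longleftrightarrow> R d c"
proof
  assume "R d c" then show "rk R D d < rk R D c" using rk_mono[OF st fin c(2) c(1)] by simp
next
  assume a: "rk R D d < rk R D c"
  show "R d c"
  proof (rule ccontr)
    assume "\<not> R d c"
    then have "d = c \<or> R c d" using st unfolding strict_tot_def by blast
    then show False using a rk_mono[OF st fin c] by auto
  qed
qed

lemma rk_bij:
  assumes st: "strict_tot R" and fin: "finite D"
  shows "bij_betw (rk R D) D {1..card D}"
proof -
  have inj: "inj_on (rk R D) D"
  proof (rule inj_onI)
    fix x y assume "x \<in> D" "y \<in> D" "rk R D x = rk R D y"
    moreover have "x \<noteq> y \<Longrightarrow> R x y \<or> R y x" using st unfolding strict_tot_def by blast
    ultimately show "x = y" using rk_less_iff[OF st fin, of x y] rk_less_iff[OF st fin, of y x]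
      by fastforce
  qed
  have sub: "rk R D ` D \<subseteq> {1..card D}"
  proof
    fix v assume "v \<in> rk R D ` D"
    then obtain c where c: "c \<in> D" "v = rk R D c" by auto
    have "1 \<le> rk R D c" unfolding rk_def using c fin
      by (metis (mono_tags, lifting) One_nat_def Suc_leI card_gt_0_iff empty_iff finite_subset mem_Collect_eq subsetI)
    moreover have "rk R D c \<le> card D" unfolding rk_def using fin by (intro card_mono) auto
    ultimately show "v \<in> {1..card D}" using c by simp
  qed
  have "card (rk R D ` D) = card {1..card D}" using card_image[OF inj] by simp
  then have "rk R D ` D = {1..card D}" using sub by (intro card_subset_eq) auto
  then show ?thesis using inj by (simp add: bij_betw_def)
qed

lemma unique_rk:
  assumes st: "strict_tot R" and fin: "finite D" and bf: "bij_filling D T"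
    and mono: "\<forall>c\<in>D. \<forall>d\<in>D. R c d \<longrightarrow> T c < T d" and c: "c \<in> D"
  shows "T c = rk R D c"
proof -
  have eq: "{d\<in>D. R d c \<or> d = c} = {d\<in>D. T d \<le> T c}"
  proof (intro Collect_cong conj_cong refl iffI)
    fix d assume "d \<in> D" "R d c \<or> d = c" then show "T d \<le> T c" using mono c by force
  next
    fix d assume d: "d \<in> D" "T d \<le> T c"
    show "R d c \<or> d = c"
    proof (rule ccontr)
      assume "\<not> (R d c \<or> d = c)"
      then have "R c d" using st unfolding strict_tot_def by blast
      then show False using mono c d by force
    qed
  qed
  have inj: "inj_on T {d\<in>D. T d \<le> T c}" using bf_inj[OF bf] by (auto intro: inj_onI)
  have img: "T ` {d\<in>D. T d \<le> T c} = {1..T c}"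
  proof
    show "T ` {d\<in>D. T d \<le> T c} \<subseteq> {1..T c}" using bf_range[OF bf] by auto
    show "{1..T c} \<subseteq> T ` {d\<in>D. T d \<le> T c}"
    proof
      fix v assume v: "v \<in> {1..T c}"
      then have "v \<in> {1..card D}" using bf_range[OF bf c] by auto
      then obtain d where "d \<in> D" "T d = v" using bf_surj[OF bf] by blast
      then show "v \<in> T ` {d\<in>D. T d \<le> T c}" using v by auto
    qed
  qed
  have "rk R D c = card {d\<in>D. T d \<le> T c}" unfolding rk_def eq ..
  also have "\<dots> = card {1..T c}" using card_image[OF inj] img by simp
  finally show ?thesis by simp
qed

lemma S_row_rk: "c \<in> skew_cells a b \<Longrightarrow> S_row a b c = rk rowlt (skew_cells a b) c"
proof -
  let ?D = "skew_cells a b"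
  assume c: "c \<in> ?D"
  have "{d\<in>?D. rowlt d c \<or> d = c} = {d \<in> ?D. fst d < fst c} \<union> {d \<in> ?D. fst d = fst c \<and> snd d \<le> snd c}"
    by (auto simp: rowlt_def prod_eq_iff)
  moreover have "card ({d \<in> ?D. fst d < fst c} \<union> {d \<in> ?D. fst d = fst c \<and> snd d \<le> snd c})
     = card {d \<in> ?D. fst d < fst c} + card {d \<in> ?D. fst d = fst c \<and> snd d \<le> snd c}"
    by (rule card_Un_disjoint) (use finite_skew in auto)
  ultimately show ?thesis using c by (simp add: S_row_def rk_def)
qed

lemma S_col_rk: "c \<in> skew_cells a b \<Longrightarrow> S_col a b c = rk collt (skew_cells a b) c"
proof -
  let ?D = "skew_cells a b"
  assume c: "c \<in> ?D"
  have "{d\<in>?D. collt d c \<or> d = c} = {d \<in> ?D. snd d < snd c} \<union> {d \<in> ?D. snd d = snd c \<and> fst d \<le> fst c}"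
    by (auto simp: collt_def prod_eq_iff)
  moreover have "card ({d \<in> ?D. snd d < snd c} \<union> {d \<in> ?D. snd d = snd c \<and> fst d \<le> fst c})
     = card {d \<in> ?D. snd d < snd c} + card {d \<in> ?D. snd d = snd c \<and> fst d \<le> fst c}"
    by (rule card_Un_disjoint) (use finite_skew in auto)
  ultimately show ?thesis using c by (simp add: S_col_def rk_def)
qed

lemma S_row_out: "c \<notin> skew_cells a b \<Longrightarrow> S_row a b c = 0" by (simp add: S_row_def)
lemma S_col_out: "c \<notin> skew_cells a b \<Longrightarrow> S_col a b c = 0" by (simp add: S_col_def)

lemma rk_filling:
  assumes st: "strict_tot R" and fin: "finite D"
    and S: "\<And>c. c \<in> D \<Longrightarrow> S c = rk R D c" "\<And>c. c \<notin> D \<Longrightarrow> S c = 0"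
  shows "bij_filling D S" and "\<And>P. (\<And>x y. P x y \<Longrightarrow> R x y) \<Longrightarrow> ordok P D S"
proof -
  show "bij_filling D S" unfolding bij_filling_def
    using rk_bij[OF st fin] S by (auto intro: bij_betw_cong[THEN iffD1])
next
  fix P assume "\<And>x y. P x y \<Longrightarrow> R x y"
  then show "ordok P D S" unfolding ordok_def using rk_mono[OF st fin] S by auto
qed

lemma S_row_SIT: "S_row a b \<in> SIT a b"
proof -
  have S1: "\<And>c. c \<in> skew_cells a b \<Longrightarrow> S_row a b c = rk rowlt (skew_cells a b) c" by (rule S_row_rk)
  have S2: "\<And>c. c \<notin> skew_cells a b \<Longrightarrow> S_row a b c = 0" by (rule S_row_out)
  note F = rk_filling[OF st_rowlt finite_skew S1 S2]
  have "ordok Prow (skew_cells a b) (S_row a b)" by (rule F(2)) (auto simp: Prow_def rowlt_def)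
  moreover have "ordok Pcol1 (skew_cells a b) (S_row a b)" by (rule F(2)) (auto simp: Pcol1_def rowlt_def)
  ultimately show ?thesis unfolding SIT_iff using F(1) by simp
qed

lemma S_col_SET: "S_col a b \<in> SET a b"
proof -
  have S1: "\<And>c. c \<in> skew_cells a b \<Longrightarrow> S_col a b c = rk collt (skew_cells a b) c" by (rule S_col_rk)
  have S2: "\<And>c. c \<notin> skew_cells a b \<Longrightarrow> S_col a b c = 0" by (rule S_col_out)
  note F = rk_filling[OF st_collt finite_skew S1 S2]
  have "ordok Prow (skew_cells a b) (S_col a b)" by (rule F(2)) (auto simp: Prow_def collt_def)
  moreover have "ordok Pcol1 (skew_cells a b) (S_col a b)" by (rule F(2)) (auto simp: Pcol1_def collt_def)
  moreover have "ordok Pcol (skew_cells a b) (S_col a b)" by (rule F(2)) (auto simp: Pcol_def collt_def)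
  ultimately show ?thesis unfolding SET_iff SIT_iff using F(1) by simp
qed



lemma part_mono:
  assumes "is_partition b" "1 \<le> r" "r \<le> p"
  shows "part b p \<le> part b r"
proof (cases "p \<le> length b")
  case True
  show ?thesis
  proof (cases "r = p")
    case False
    then have "b ! (r - 1) \<ge> b ! (p - 1)"
      using sorted_wrt_nth_less[of "(\<ge>)" b "r - 1" "p - 1"] assms True
      by (auto simp: is_partition_def)
    then show ?thesis using assms True by (simp add: part_def)
  qed simp
qed (simp add: part_def)

lemma NE_lemma:
  assumes T: "T \<in> SET a b" and pb: "is_partition b"
    and c: "c \<in> skew_cells a b" and x: "x \<in> skew_cells a b"
    and le: "fst c \<le> fst x" and lt: "snd c < snd x"
  shows "T c < T x"
proof -
  let ?D = "skew_cells a b"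
  let ?y = "(fst x, snd c)"
  have cc: "1 \<le> fst c" "part b (fst c) < snd c" using c by (auto simp: skew_cells_def)
  have xx: "1 \<le> fst x" "fst x \<le> length a" "snd x \<le> part a (fst x)" using x by (auto simp: skew_cells_def)
  have "part b (fst x) \<le> part b (fst c)" using part_mono[OF pb cc(1) le] .
  then have y: "?y \<in> ?D" using cc xx lt by (auto simp: skew_cells_def)
  have ok: "ordok Prow ?D T" "ordok Pcol ?D T" using T by (auto simp: SET_iff SIT_iff)
  have "T ?y < T x" using ok(1) y x lt unfolding ordok_def Prow_def by auto
  moreover have "T c \<le> T ?y"
  proof (cases "fst c = fst x")
    case True then have "?y = c" by (simp add: prod_eq_iff)
    then show ?thesis by simp
  next
    case False then show ?thesis using ok(2) c y le unfolding ordok_def Pcol_def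
      by (metis fst_conv le_neq_implies_less less_imp_le snd_conv)
  qed
  ultimately show ?thesis by simp
qed



lemma termA:
  assumes T: "T \<in> SET a b" and pb: "is_partition b"
    and trm: "\<forall>c0\<in>skew_cells a b. \<forall>c1\<in>skew_cells a b. T c1 = Suc (T c0) \<longrightarrow> fst c0 < fst c1 \<longrightarrow> snd c0 = snd c1"
  shows "\<forall>c\<in>skew_cells a b. \<forall>d\<in>skew_cells a b. snd c < snd d \<longrightarrow> T c < T d"
proof -
  let ?D = "skew_cells a b"
  have bf: "bij_filling ?D T" using T by (simp add: SET_iff SIT_iff)
  have main: "\<forall>c d. c \<in> ?D \<and> d \<in> ?D \<and> snd c < snd d \<and> T c - T d = m \<longrightarrow> T c < T d" for m
  proof (induction m rule: less_induct)
    case (less m)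
    show ?case
    proof (intro allI impI, elim conjE)
      fix c d assume c: "c \<in> ?D" and d: "d \<in> ?D" and lt: "snd c < snd d" and m: "T c - T d = m"
      show "T c < T d"
      proof (rule ccontr)
        assume "\<not> T c < T d"
        moreover have "T c \<noteq> T d" using bf_inj[OF bf c d] lt by auto
        ultimately have dc: "T d < T c" by simp
        have "1 \<le> T d" using bf_range[OF bf d] by simp
        have "T c \<le> card ?D" using bf_range[OF bf c] by simp
        moreover have "T c - 1 \<in> {1..card ?D}" using calculation dc \<open>1 \<le> T d\<close> by auto
        ultimately obtain e where e: "e \<in> ?D" "T e = T c - 1"
          using bf_surj[OF bf, of "T c - 1"] by blast
        have Sc: "T c = Suc (T e)" using e dc by simp
        show False
        proof (cases "e = d")
          case True
          have "fst e < fst c \<longrightarrow> snd e = snd c" using trm e(1) c Sc by blast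
          then have "fst c \<le> fst d" using True lt by auto
          then show False using NE_lemma[OF T pb c d _ lt] dc by simp
        next
          case False
          have "T e \<noteq> T d" using bf_inj[OF bf e(1) d] False by auto
          then have ed: "T d < T e" using e dc by simp
          show False
          proof (cases "snd e < snd d")
            case True
            have "T e - T d < m" using m ed Sc by simp
            then have "T e < T d" using less.IH[of "T e - T d"] e(1) d True by blast
            then show False using ed by simp
          next
            case False
            then have "snd c < snd e" using lt by simp
            moreover have "fst e < fst c \<longrightarrow> snd e = snd c" using trm e(1) c Sc by blast
            ultimately have "fst c \<le> fst e" by auto
            then show False using NE_lemma[OF T pb c e(1) _ \<open>snd c < snd e\<close>] Sc by simp
          qed
        qed
      qed
    qed
  qed
  show ?thesis using main by blast
qed



lemma termB:
  assumes bf: "bij_filling D T"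
    and trm: "\<forall>c0\<in>D. \<forall>c1\<in>D. T c1 = Suc (T c0) \<longrightarrow> fst c0 \<le> fst c1"
  shows "\<forall>c\<in>D. \<forall>d\<in>D. T c \<le> T d \<longrightarrow> fst c \<le> fst d"
proof -
  have main: "\<forall>c d. c \<in> D \<and> d \<in> D \<and> T c \<le> T d \<and> T d - T c = m \<longrightarrow> fst c \<le> fst d" for m
  proof (induction m)
    case 0
    show ?case
    proof (intro allI impI, elim conjE)
      fix c d assume cd: "c \<in> D" "d \<in> D" "T c \<le> T d" "T d - T c = 0"
      then have "T c = T d" by simp
      then have "c = d" using bf_inj[OF bf cd(1,2)] by blast
      then show "fst c \<le> fst d" by simp
    qed
  next
    case (Suc m)
    show ?case
    proof (intro allI impI, elim conjE)
      fix c d assume c: "c \<in> D" and d: "d \<in> D" and le: "T c \<le> T d" and m: "T d - T c = Suc m"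
      have "1 \<le> T c" using bf_range[OF bf c] by simp
      have "T d \<le> card D" using bf_range[OF bf d] by simp
      moreover have "T d - 1 \<in> {1..card D}" using calculation m \<open>1 \<le> T c\<close> by auto
      ultimately obtain e where e: "e \<in> D" "T e = T d - 1"
        using bf_surj[OF bf, of "T d - 1"] by blast
      have "T c \<le> T e" "T e - T c = m" using e m by auto
      then have "fst c \<le> fst e" using Suc.IH c e(1) by blast
      moreover have "T d = Suc (T e)" using e m by simp
      then have "fst e \<le> fst d" using trm e(1) d by blast
      ultimately show "fst c \<le> fst d" by simp
    qed
  qed
  show ?thesis using main by blast
qed



lemma down:
  assumes pb: "is_partition b"
  shows "T \<in> SET a b \<Longrightarrow> tab_le a b (S_col a b) T"
proof (induction "mu (skew_cells a b) T" arbitrary: T rule: less_induct)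
  case less
  let ?D = "skew_cells a b"
  have T: "T \<in> SET a b" by fact
  have TS: "T \<in> SIT a b" using T by (simp add: SET_iff)
  have bf: "bij_filling ?D T" using T by (simp add: SET_iff SIT_iff)
  show ?case
  proof (cases "\<forall>c0\<in>?D. \<forall>c1\<in>?D. T c1 = Suc (T c0) \<longrightarrow> fst c0 < fst c1 \<longrightarrow> snd c0 = snd c1")
    case True
    note A = termA[OF T pb True]
    have okc: "ordok Pcol ?D T" using T by (simp add: SET_iff)
    have mono: "\<forall>c\<in>?D. \<forall>d\<in>?D. collt c d \<longrightarrow> T c < T d"
      using A okc unfolding ordok_def collt_def Pcol_def by auto
    have "T = S_col a b"
    proof
      fix c show "T c = S_col a b c"
      proof (cases "c \<in> ?D")
        case True
        then show ?thesis using unique_rk[OF st_collt finite_skew bf mono True] S_col_rk[OF True] by simp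
      next
        case False
        then show ?thesis using bf[unfolded bij_filling_def, THEN conjunct2, rule_format, OF False] S_col_out[OF False] by simp
      qed
    qed
    then show ?thesis using TS by (simp add: tab_le_def)
  next
    case False
    then obtain c0 c1 where c0: "c0 \<in> ?D" and c1: "c1 \<in> ?D" and s: "T c1 = Suc (T c0)"
      and lt: "fst c0 < fst c1" and ne: "snd c0 \<noteq> snd c1" by blast
    define k where "k = T c0"
    have c0': "T c0 = k" and c1': "T c1 = Suc k" using s by (auto simp: k_def)
    have k1: "1 \<le> k" using bf_range[OF bf c0] k_def by simp
    have k2: "Suc k \<le> card ?D" using bf_range[OF bf c1] c1' by simp
    define T0 where "T0 = swap_entries k T"
    have np: "\<not> Prow c0 c1" "\<not> Pcol1 c0 c1" "\<not> Pcol c0 c1"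
      using lt ne by (auto simp: Prow_def Pcol1_def Pcol_def)
    have bf0: "bij_filling ?D T0" unfolding T0_def using sw_bf[OF bf k1 k2] .
    have T0: "T0 \<in> SET a b" using T unfolding SET_iff SIT_iff T0_def
      using sw_bf[OF bf k1 k2] sw_ord[OF bf c0 c0' c1 c1'] np by auto
    have "mu ?D T0 + fst c1 = mu ?D T + fst c0"
      unfolding T0_def by (rule sw_mu[OF finite_skew bf c0 c0' c1 c1'])
    then have mlt: "mu ?D T0 < mu ?D T" using lt by simp
    have v0: "T0 c1 = k" "T0 c0 = Suc k" using sw_vals[OF bf c0 c0' c1 c1'] by (auto simp: T0_def)
    have r: "row_of ?D T0 k = fst c1" "row_of ?D T0 (k+1) = fst c0"
      using bf_row_of[OF bf0 c1] bf_row_of[OF bf0 c0] v0 by auto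
    have "pi_op ?D k T0 = Some T"
      using r lt by (simp add: pi_op_def T0_def sw_sw)
    then have step: "pi_step ?D T0 T" using k1 k2 by (auto simp: pi_step_def)
    have "tab_le a b (S_col a b) T0" using less.hyps[OF mlt T0] .
    then show ?thesis using step TS by (auto simp: tab_le_def)
  qed
qed



lemma up:
  shows "T \<in> SIT a b \<Longrightarrow> tab_le a b T (S_row a b)"
proof (induction "(\<Sum>c\<in>skew_cells a b. card (skew_cells a b) * fst c) - mu (skew_cells a b) T" arbitrary: T rule: less_induct)
  case less
  let ?D = "skew_cells a b"
  let ?B = "\<Sum>c\<in>skew_cells a b. card (skew_cells a b) * fst c"
  have T: "T \<in> SIT a b" by fact
  have bf: "bij_filling ?D T" using T by (simp add: SIT_iff)
  have bound: "mu ?D T' \<le> ?B" if "bij_filling ?D T'" for T'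
    unfolding mu_def by (rule sum_mono) (use bf_range[OF that] in auto)
  show ?case
  proof (cases "\<forall>c0\<in>?D. \<forall>c1\<in>?D. T c1 = Suc (T c0) \<longrightarrow> fst c0 \<le> fst c1")
    case True
    note B = termB[OF bf True]
    have okr: "ordok Prow ?D T" using T by (simp add: SIT_iff)
    have mono: "\<forall>c\<in>?D. \<forall>d\<in>?D. rowlt c d \<longrightarrow> T c < T d"
    proof (intro ballI impI)
      fix c d assume c: "c \<in> ?D" and d: "d \<in> ?D" and r: "rowlt c d"
      show "T c < T d"
      proof (cases "fst c < fst d")
        case True
        have "T d \<le> T c \<longrightarrow> fst d \<le> fst c" using B c d by blast
        then show ?thesis using True by auto
      next
        case False then show ?thesis using okr c d r unfolding ordok_def Prow_def rowlt_def by auto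
      qed
    qed
    have "T = S_row a b"
    proof
      fix c show "T c = S_row a b c"
      proof (cases "c \<in> ?D")
        case True
        then show ?thesis using unique_rk[OF st_rowlt finite_skew bf mono True] S_row_rk[OF True] by simp
      next
        case False
        then show ?thesis using bf[unfolded bij_filling_def, THEN conjunct2, rule_format, OF False] S_row_out[OF False] by simp
      qed
    qed
    then show ?thesis using T by (simp add: tab_le_def)
  next
    case False
    then obtain c0 c1 where c0: "c0 \<in> ?D" and c1: "c1 \<in> ?D" and s: "T c1 = Suc (T c0)"
      and lt: "fst c1 < fst c0" by force
    define k where "k = T c0"
    have c0': "T c0 = k" and c1': "T c1 = Suc k" using s by (auto simp: k_def)
    have k1: "1 \<le> k" using bf_range[OF bf c0] k_def by simp
    have k2: "Suc k \<le> card ?D" using bf_range[OF bf c1] c1' by simp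
    define T' where "T' = swap_entries k T"
    have np: "\<not> Prow c0 c1" "\<not> Pcol1 c0 c1"
      using lt by (auto simp: Prow_def Pcol1_def)
    have bf': "bij_filling ?D T'" unfolding T'_def using sw_bf[OF bf k1 k2] .
    have T': "T' \<in> SIT a b" using T unfolding SIT_iff T'_def
      using sw_bf[OF bf k1 k2] sw_ord[OF bf c0 c0' c1 c1'] np by auto
    have "mu ?D T' + fst c1 = mu ?D T + fst c0"
      unfolding T'_def by (rule sw_mu[OF finite_skew bf c0 c0' c1 c1'])
    then have mlt: "mu ?D T < mu ?D T'" using lt by simp
    have mlt2: "?B - mu ?D T' < ?B - mu ?D T" using mlt bound[OF bf'] by simp
    have r: "row_of ?D T k = fst c0" "row_of ?D T (k+1) = fst c1"
      using bf_row_of[OF bf c1] bf_row_of[OF bf c0] c0' c1' by auto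
    have "pi_op ?D k T = Some T'"
      using r lt by (simp add: pi_op_def T'_def)
    then have step: "pi_step ?D T T'" using k1 k2 by (auto simp: pi_step_def)
    have "tab_le a b T' (S_row a b)" using less.hyps[OF mlt2 T'] .
    then show ?thesis using step T by (auto simp: tab_le_def intro: converse_rtranclp_into_rtranclp)
  qed
qed



lemma card_pairs:
  assumes st: "strict_tot R" and fin: "finite A"
  shows "card {(x,y). x \<in> A \<and> y \<in> A \<and> R y x} = card A choose 2"
proof -
  let ?P = "{(x,y). x \<in> A \<and> y \<in> A \<and> R y x}"
  have irr: "\<And>x. \<not> R x x" and tr: "\<And>x y z. R x y \<Longrightarrow> R y z \<Longrightarrow> R x z"
    and tot: "\<And>x y. x \<noteq> y \<Longrightarrow> R x y \<or> R y x" using st unfolding strict_tot_def by blast+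
  have inj: "inj_on (\<lambda>(x,y). {x,y}) ?P"
  proof (rule inj_onI, clarify)
    fix x y x' y' assume a: "x \<in> A" "y \<in> A" "R y x" "x' \<in> A" "y' \<in> A" "R y' x'" "{x,y} = {x',y'}"
    then have "x = x' \<and> y = y' \<or> x = y' \<and> y = x'" by (simp add: doubleton_eq_iff)
    then show "x = x' \<and> y = y'" using a irr tr by blast
  qed
  have img: "(\<lambda>(x,y). {x,y}) ` ?P = {B. B \<subseteq> A \<and> card B = 2}"
  proof
    show "(\<lambda>(x,y). {x,y}) ` ?P \<subseteq> {B. B \<subseteq> A \<and> card B = 2}"
    proof clarify
      fix x y assume "x \<in> A" "y \<in> A" "R y x"
      then have "x \<noteq> y" using irr by blast
      then show "{x,y} \<subseteq> A \<and> card {x,y} = 2" using \<open>x \<in> A\<close> \<open>y \<in> A\<close> by simp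
    qed
    show "{B. B \<subseteq> A \<and> card B = 2} \<subseteq> (\<lambda>(x,y). {x,y}) ` ?P"
    proof clarify
      fix B assume B: "B \<subseteq> A" "card B = 2"
      then obtain x y where xy: "B = {x,y}" "x \<noteq> y" by (auto simp: card_2_iff)
      show "B \<in> (\<lambda>(x,y). {x,y}) ` ?P"
      proof (cases "R y x")
        case True
        then have "(x,y) \<in> ?P" using B xy by auto
        then show ?thesis using xy by force
      next
        case False
        then have "R x y" using tot xy by blast
        then have "(y,x) \<in> ?P" using B xy by auto
        moreover have "B = {y,x}" using xy by auto
        ultimately show ?thesis by force
      qed
    qed
  qed
  have "card ?P = card ((\<lambda>(x,y). {x,y}) ` ?P)" using card_image[OF inj] by simp
  also have "\<dots> = card A choose 2" unfolding img using n_subsets[OF fin] by simp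
  finally show ?thesis .
qed

lemma rank_formula:
  "int (inv_count a b (S_row a b)) - int (inv_count a b (S_col a b))
        = int (card (skew_cells a b) choose 2) - int (\<Sum>c\<in>skew_cells a b. ls a b c)"
proof -
  let ?D = "skew_cells a b"
  define A1 where "A1 = {(c,d). c \<in> ?D \<and> d \<in> ?D \<and> fst d < fst c}"
  define A2 where "A2 = {(c,d). c \<in> ?D \<and> d \<in> ?D \<and> fst d < fst c \<and> snd d \<le> snd c}"
  define A4 where "A4 = {(c,d). c \<in> ?D \<and> d \<in> ?D \<and> fst d = fst c \<and> snd d < snd c}"
  have finDD: "finite (?D \<times> ?D)" using finite_skew by simp
  have fin1: "finite A1" "finite A2" "finite A4"
    unfolding A1_def A2_def A4_def by (auto intro: finite_subset[OF _ finDD])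
  have i1: "inv_count a b (S_row a b) = card A1"
    unfolding inv_count_def A1_def
    by (rule arg_cong[where f=card])
      (auto simp: S_row_rk rk_less_iff[OF st_rowlt finite_skew] rowlt_def)
  have i2: "inv_count a b (S_col a b) = card A2"
    unfolding inv_count_def A2_def
    by (rule arg_cong[where f=card])
      (auto simp: S_col_rk rk_less_iff[OF st_collt finite_skew] collt_def)
  have "(\<Sum>c\<in>?D. ls a b c) = card (SIGMA c:?D. {d\<in>?D. d \<noteq> c \<and> fst d \<le> fst c \<and> snd d \<le> snd c})"
    using finite_skew by (simp add: ls_def)
  also have "(SIGMA c:?D. {d\<in>?D. d \<noteq> c \<and> fst d \<le> fst c \<and> snd d \<le> snd c}) = A2 \<union> A4"
    unfolding A2_def A4_def by (auto simp: prod_eq_iff)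
  also have "card (A2 \<union> A4) = card A2 + card A4"
    by (rule card_Un_disjoint) (use fin1 in \<open>auto simp: A2_def A4_def\<close>)
  finally have s: "(\<Sum>c\<in>?D. ls a b c) = card A2 + card A4" .
  have "card ?D choose 2 = card {(x,y). x \<in> ?D \<and> y \<in> ?D \<and> rowlt y x}"
    using card_pairs[OF st_rowlt finite_skew] by simp
  also have "{(x,y). x \<in> ?D \<and> y \<in> ?D \<and> rowlt y x} = A1 \<union> A4"
    unfolding A1_def A4_def rowlt_def by auto
  also have "card (A1 \<union> A4) = card A1 + card A4"
    by (rule card_Un_disjoint) (use fin1 in \<open>auto simp: A1_def A4_def\<close>)
  finally have c: "card ?D choose 2 = card A1 + card A4" .
  show ?thesis unfolding i1 i2 s c by simp
qed

theorem corollary4p3: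
  fixes a b :: "nat list"
  assumes "is_composition a" and "is_composition b"
    and "comp_contained b a" and "reduced a b" and "is_partition b"
  shows "S_col a b \<in> SET a b
    \<and> {T \<in> SET a b. \<not> (\<exists>T'\<in>SET a b. T' \<noteq> T \<and> tab_le a b T' T)} = {S_col a b}
    \<and> SET a b = {T. tab_le a b (S_col a b) T \<and> tab_le a b T (S_row a b)}
    \<and> int (inv_count a b (S_row a b)) - int (inv_count a b (S_col a b))
        = int (card (skew_cells a b) choose 2) - int (\<Sum>c\<in>skew_cells a b. ls a b c)"
proof -
  note pb = assms(5)
  have SC: "S_col a b \<in> SET a b" by (rule S_col_SET)
  have SCI: "S_col a b \<in> SIT a b" using SC by (simp add: SET_iff)
  have P3: "SET a b = {T. tab_le a b (S_col a b) T \<and> tab_le a b T (S_row a b)}"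
  proof
    show "SET a b \<subseteq> {T. tab_le a b (S_col a b) T \<and> tab_le a b T (S_row a b)}"
    proof
      fix T assume T: "T \<in> SET a b"
      then have "T \<in> SIT a b" by (simp add: SET_iff)
      then show "T \<in> {T. tab_le a b (S_col a b) T \<and> tab_le a b T (S_row a b)}"
        using down[OF pb T] up by simp
    qed
    show "{T. tab_le a b (S_col a b) T \<and> tab_le a b T (S_row a b)} \<subseteq> SET a b"
    proof
      fix T assume "T \<in> {T. tab_le a b (S_col a b) T \<and> tab_le a b T (S_row a b)}"
      then have "(pi_step (skew_cells a b))\<^sup>*\<^sup>* (S_col a b) T" by (simp add: tab_le_def)
      then show "T \<in> SET a b" using rt_SIT[OF _ SCI] SC by blast
    qed
  qed
  have P2: "{T \<in> SET a b. \<not> (\<exists>T'\<in>SET a b. T' \<noteq> T \<and> tab_le a b T' T)} = {S_col a b}"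
  proof
    show "{T \<in> SET a b. \<not> (\<exists>T'\<in>SET a b. T' \<noteq> T \<and> tab_le a b T' T)} \<subseteq> {S_col a b}"
    proof clarify
      fix T assume T: "T \<in> SET a b" and n: "\<not> (\<exists>T'\<in>SET a b. T' \<noteq> T \<and> tab_le a b T' T)"
      show "T = S_col a b"
      proof (rule ccontr)
        assume "T \<noteq> S_col a b"
        then have "S_col a b \<noteq> T" by simp
        then show False using down[OF pb T] n SC by blast
      qed
    qed
    show "{S_col a b} \<subseteq> {T \<in> SET a b. \<not> (\<exists>T'\<in>SET a b. T' \<noteq> T \<and> tab_le a b T' T)}"
    proof -
      have "\<not> (\<exists>T'\<in>SET a b. T' \<noteq> S_col a b \<and> tab_le a b T' (S_col a b))"
      proof
        assume "\<exists>T'\<in>SET a b. T' \<noteq> S_col a b \<and> tab_le a b T' (S_col a b)"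
        then obtain T' where T': "T' \<in> SET a b" "T' \<noteq> S_col a b" "tab_le a b T' (S_col a b)" by blast
        have T'I: "T' \<in> SIT a b" using T' by (simp add: SET_iff)
        have r1: "(pi_step (skew_cells a b))\<^sup>*\<^sup>* T' (S_col a b)" using T' by (simp add: tab_le_def)
        have r2: "(pi_step (skew_cells a b))\<^sup>*\<^sup>* (S_col a b) T'" using down[OF pb T'(1)] by (simp add: tab_le_def)
        have "mu (skew_cells a b) T' < mu (skew_cells a b) (S_col a b)"
          using rt_SIT[OF r1 T'I] T'(2) by auto
        moreover have "mu (skew_cells a b) (S_col a b) < mu (skew_cells a b) T'"
          using rt_SIT[OF r2 SCI] T'(2) by auto
        ultimately show False by simp
      qed
      then show ?thesis using SC by blast
    qed
  qed
  show ?thesis using SC P2 P3 rank_formula by blast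
qed

end
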